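(* For any low-rank POMDP with transition feature dimension $d_{\mathrm{trans}}$, the minimum core test set size is at most $d_{\mathrm{trans}}$; that is, $\mathrm{rank}(D_h)\le d_{\mathrm{trans}}$ for every $h$, so $d_{\mathrm{PSR}}\le d_{\mathrm{trans}}$.
   Context: An episodic POMDP has finite state space $\mathcal{S}$, finite $\mathcal{O},\mathcal{A}$, horizon $H$, transitions $\mathbb{T}_h(s'\mid s,a)$ and emissions $\mathbb{O}_h(o\mid s)$. It is low-rank if for all $h$, $\mathbb{T}_h(s'\mid s,a)=\psi_h(s')^\top\phi_h(s,a)$ for some maps $\psi_h:\mathcal{S}\to\mathbb{R}^{d_{\mathrm{trans}}}$, $\phi_h:\mathcal{S}\times\mathcal{A}\to\mathbb{R}^{d_{\mathrm{trans}}}$. Histories $\tau_h=(o_1,a_1,\dots,o_h,a_h)$. For a test $t=(o_{h+1},\dots,o_{h+W},a_{h+1},\dots,a_{h+W-1})$, $\mathbb{P}(t\mid\tau_h)$ is the probability of observing $o_{h+1:h+W}$ when executing $a_{h+1:h+W-1}$ after $\tau_h$ ($0$ if unreachable). $D_h$ is the matrix with rows indexed by tests starting at step $h+1$, columns by histories $\tau_h$, entries $\mathbb{P}(t\mid\tau_h)$; $d_{\mathrm{PSR}}=\max_h\mathrm{rank}(D_h)$, and $\mathrm{rank}(D_h)$ equals the size of a minimum core test set at step $h+1$. *)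

theory Defs
  imports Complex_Main "HOL-Library.Function_Algebras"
begin

text \<open>Steps are numbered 1..H.  T k s a s' = T_k(s' | s, a) (transition from step k to k+1),
  Om k s o = O_k(o | s), mu = distribution of the initial state s_1.
  A history of length h is a list [(o_1,a_1),...,(o_h,a_h)].
  A test at step h+1 is a pair (os, as) with os = [o_{h+1},...,o_{h+W}],
  as = [a_{h+1},...,a_{h+W-1}], W >= 1 and h + W <= H.\<close>

definition stochastic_pomdp ::
  "nat \<Rightarrow> ('S::finite \<Rightarrow> real) \<Rightarrow> (nat \<Rightarrow> 'S \<Rightarrow> 'A::finite \<Rightarrow> 'S \<Rightarrow> real)
     \<Rightarrow> (nat \<Rightarrow> 'S \<Rightarrow> 'O::finite \<Rightarrow> real) \<Rightarrow> bool" where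
  "stochastic_pomdp H mu T Om \<longleftrightarrow>
     (\<forall>s. 0 \<le> mu s) \<and> (\<Sum>s\<in>UNIV. mu s) = 1 \<and>
     (\<forall>k\<in>{1..H}. \<forall>s a. (\<forall>s'. 0 \<le> T k s a s') \<and> (\<Sum>s'\<in>UNIV. T k s a s') = 1) \<and>
     (\<forall>k\<in>{1..H}. \<forall>s. (\<forall>ob. 0 \<le> Om k s ob) \<and> (\<Sum>ob\<in>UNIV. Om k s ob) = 1)"

definition low_rank ::
  "nat \<Rightarrow> nat \<Rightarrow> (nat \<Rightarrow> 'S \<Rightarrow> 'A \<Rightarrow> 'S \<Rightarrow> real) \<Rightarrow> bool" where
  "low_rank H d T \<longleftrightarrow>
     (\<exists>psi :: nat \<Rightarrow> 'S \<Rightarrow> nat \<Rightarrow> real. \<exists>phi :: nat \<Rightarrow> 'S \<Rightarrow> 'A \<Rightarrow> nat \<Rightarrow> real.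
        \<forall>k\<in>{1..H}. \<forall>s a s'. T k s a s' = (\<Sum>i<d. psi k s' i * phi k s a i))"

text \<open>Forward recursion: fwd T Om k b tau s' is the (unnormalised) joint probability of
  the observations in tau and of the next state being s', when the state at step k has
  (sub)distribution b and the actions in tau are executed.\<close>
fun fwd :: "(nat \<Rightarrow> 'S::finite \<Rightarrow> 'A \<Rightarrow> 'S \<Rightarrow> real) \<Rightarrow> (nat \<Rightarrow> 'S \<Rightarrow> 'O \<Rightarrow> real)
     \<Rightarrow> nat \<Rightarrow> ('S \<Rightarrow> real) \<Rightarrow> ('O \<times> 'A) list \<Rightarrow> 'S \<Rightarrow> real" where
  "fwd T Om k b [] = b"
| "fwd T Om k b ((ob,a) # tau) =
     fwd T Om (Suc k) (\<lambda>s'. \<Sum>s\<in>UNIV. b s * Om k s ob * T k s a s') tau"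

text \<open>fut T Om k s os as: probability of observing os = [o_k, o_{k+1}, ...] when the
  state at step k is s and the actions as = [a_k, ...] are executed.\<close>
fun fut :: "(nat \<Rightarrow> 'S::finite \<Rightarrow> 'A \<Rightarrow> 'S \<Rightarrow> real) \<Rightarrow> (nat \<Rightarrow> 'S \<Rightarrow> 'O \<Rightarrow> real)
     \<Rightarrow> nat \<Rightarrow> 'S \<Rightarrow> 'O list \<Rightarrow> 'A list \<Rightarrow> real" where
  "fut T Om k s [] as = 1"
| "fut T Om k s [ob] as = Om k s ob"
| "fut T Om k s (ob # o' # os) (a # as) =
     Om k s ob * (\<Sum>s'\<in>UNIV. T k s a s' * fut T Om (Suc k) s' (o' # os) as)"
| "fut T Om k s (ob # o' # os) [] = 0"

definition hist_prob where
  "hist_prob mu T Om tau = (\<Sum>s\<in>UNIV. fwd T Om 1 mu tau s)"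

definition test_prob where
  "test_prob mu T Om tau t =
     (if hist_prob mu T Om tau = 0 then 0
      else (\<Sum>s\<in>UNIV. fwd T Om 1 mu tau s * fut T Om (Suc (length tau)) s (fst t) (snd t))
            / hist_prob mu T Om tau)"

definition tests_at :: "nat \<Rightarrow> nat \<Rightarrow> ('O list \<times> 'A list) set" where
  "tests_at H h = {(os, as). 1 \<le> length os \<and> h + length os \<le> H \<and> length as + 1 = length os}"

definition histories :: "nat \<Rightarrow> ('O \<times> 'A) list set" where
  "histories h = {tau. length tau = h}"

text \<open>Rank of a real matrix M with rows indexed by R and columns indexed by C:
  dimension of the span of its columns (as functions on the row index, zero outside R).\<close>
definition mat_rank :: "'r set \<Rightarrow> 'c set \<Rightarrow> ('r \<Rightarrow> 'c \<Rightarrow> real) \<Rightarrow> nat" where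
  "mat_rank R C M =
     vector_space.dim (\<lambda>(c::real) (f::'r \<Rightarrow> real). (\<lambda>x. c * f x))
       ((\<lambda>j. (\<lambda>i. if i \<in> R then M i j else 0)) ` C)"

text \<open>D_h: rows = tests starting at step h+1, columns = histories tau_h.\<close>
definition D_rank :: "nat \<Rightarrow> ('S::finite \<Rightarrow> real) \<Rightarrow> (nat \<Rightarrow> 'S \<Rightarrow> 'A::finite \<Rightarrow> 'S \<Rightarrow> real)
     \<Rightarrow> (nat \<Rightarrow> 'S \<Rightarrow> 'O::finite \<Rightarrow> real) \<Rightarrow> nat \<Rightarrow> nat" where
  "D_rank H mu T Om h =
     mat_rank (tests_at H h :: ('O list \<times> 'A list) set) (histories h)
       (\<lambda>t tau. test_prob mu T Om tau t)"

definition d_PSR :: "nat \<Rightarrow> ('S::finite \<Rightarrow> real) \<Rightarrow> (nat \<Rightarrow> 'S \<Rightarrow> 'A::finite \<Rightarrow> 'S \<Rightarrow> real)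
     \<Rightarrow> (nat \<Rightarrow> 'S \<Rightarrow> 'O::finite \<Rightarrow> real) \<Rightarrow> nat" where
  "d_PSR H mu T Om = Max ((\<lambda>h. D_rank H mu T Om h) ` {0..H})"

end

theory Submission
  imports Defs
begin

lemma vs_fun: "vector_space (\<lambda>(c::real) (f::'r \<Rightarrow> real). (\<lambda>x. c * f x))"
  by unfold_locales (auto simp: fun_eq_iff algebra_simps)

lemma fwd_snoc:
  "fwd T Om k b (xs @ [(ob,a)]) =
   (\<lambda>s'. \<Sum>s\<in>UNIV. fwd T Om k b xs s * Om (k + length xs) s ob * T (k + length xs) s a s')"
  by (induction xs arbitrary: k b) auto

lemma sum_fun_apply: "(\<Sum>i\<in>A. f i) x = (\<Sum>i\<in>A. f i x)"
  for f :: "'i \<Rightarrow> 'r \<Rightarrow> real"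
  by (induction A rule: infinite_finite_induct) auto

lemma col_eq:
  fixes R :: "('O list \<times> 'A list) set"
  assumes "\<forall>s a s'. T h s a s' = (\<Sum>i<d. psi s' i * phi s a i)"
    and "h \<ge> 1" and "length tau = h"
  shows "\<exists>coef. (\<lambda>t. if t \<in> R then test_prob mu T Om tau t else 0) =
     (\<Sum>i<d. (\<lambda>x. coef i * (\<lambda>t. if t \<in> R then (\<Sum>s'\<in>UNIV. psi s' i *
        fut T Om (Suc h) s' (fst t) (snd t)) else 0) x))"
proof -
  obtain tau' ob a where tau: "tau = tau' @ [(ob,a)]"
    using assms(2,3) by (metis le_numeral_extra(2) length_0_conv prod.exhaust rev_exhaust)
  have lt: "1 + length tau' = h" using assms(3) tau by simp
  define b where "b = fwd T Om 1 mu tau'"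
  define c where "c i = (\<Sum>s\<in>UNIV. b s * Om h s ob * phi s a i)" for i
  define hp where "hp = hist_prob mu T Om tau"
  define coef where "coef i = (if hp = 0 then 0 else c i / hp)" for i
  have fw: "fwd T Om 1 mu tau s' = (\<Sum>i<d. c i * psi s' i)" for s'
  proof -
    have "fwd T Om 1 mu tau s' = (\<Sum>s\<in>UNIV. b s * Om h s ob * (\<Sum>i<d. psi s' i * phi s a i))"
      unfolding tau fwd_snoc b_def using lt assms(1) by simp
    also have "\<dots> = (\<Sum>i<d. c i * psi s' i)"
      unfolding c_def by (simp add: sum_distrib_left sum_distrib_right sum.swap[of _ UNIV] mult.commute mult.left_commute)
    finally show ?thesis .
  qed
  have key: "(\<Sum>s\<in>UNIV. fwd T Om 1 mu tau s * F s) = (\<Sum>i<d. c i * (\<Sum>s\<in>UNIV. psi s i * F s))" for F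
    unfolding fw by (simp add: sum_distrib_left sum_distrib_right sum.swap[of _ UNIV] mult.commute mult.left_commute)
  show ?thesis
  proof (rule exI[of _ coef], rule ext)
    fix t
    show "(if t \<in> R then test_prob mu T Om tau t else 0) = (\<Sum>i<d. (\<lambda>x. coef i * (\<lambda>t. if t \<in> R then (\<Sum>s'\<in>UNIV. psi s' i *
        fut T Om (Suc h) s' (fst t) (snd t)) else 0) x)) t"
      unfolding sum_fun_apply test_prob_def hp_def[symmetric] coef_def assms(3)
      using key[of "\<lambda>s. fut T Om (Suc h) s (fst t) (snd t)"]
      by (auto simp: sum_divide_distrib)
  qed
qed

theorem lemma14:
  fixes H d :: nat
    and mu :: "'S::finite \<Rightarrow> real"
    and T :: "nat \<Rightarrow> 'S \<Rightarrow> 'A::finite \<Rightarrow> 'S \<Rightarrow> real"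
    and Om :: "nat \<Rightarrow> 'S \<Rightarrow> 'O::finite \<Rightarrow> real"
  assumes "stochastic_pomdp H mu T Om"
    and "low_rank H d T"
  shows "(\<forall>h\<le>H. D_rank H mu T Om h \<le> d) \<and> d_PSR H mu T Om \<le> d"
proof -
  interpret V: vector_space "\<lambda>(c::real) (f::('O list \<times> 'A list) \<Rightarrow> real). (\<lambda>x. c * f x)"
    by (rule vs_fun)
  obtain psi :: "nat \<Rightarrow> 'S \<Rightarrow> nat \<Rightarrow> real" and phi :: "nat \<Rightarrow> 'S \<Rightarrow> 'A \<Rightarrow> nat \<Rightarrow> real" where
    lr: "\<forall>k\<in>{1..H}. \<forall>s a s'. T k s a s' = (\<Sum>i<d. psi k s' i * phi k s a i)"
    using assms(2) unfolding low_rank_def by blast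
  have A: "D_rank H mu T Om h \<le> d" if hH: "h \<le> H" for h
  proof (cases "h = 0")
    case True
    show ?thesis
    proof (cases "H = 0")
      case True
      with \<open>h = 0\<close> have "tests_at H h = ({} :: ('O list \<times> 'A list) set)"
        unfolding tests_at_def by auto
      then have "(\<lambda>j. (\<lambda>i. if i \<in> (tests_at H h :: ('O list \<times> 'A list) set) then test_prob mu T Om j i else 0)) ` histories h \<subseteq> {0}"
        by auto
      then have "V.dim ((\<lambda>j. (\<lambda>i. if i \<in> (tests_at H h :: ('O list \<times> 'A list) set) then test_prob mu T Om j i else 0)) ` histories h) \<le> card ({} :: (('O list \<times> 'A list) \<Rightarrow> real) set)"
        by (intro V.dim_le_card) auto
      then show ?thesis unfolding D_rank_def mat_rank_def by simp
    next
      case False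
      have "d \<noteq> 0"
      proof
        assume "d = 0"
        have "1 \<in> {1..H}" using False by simp
        then have "(\<Sum>s'\<in>UNIV. T 1 undefined undefined s') = 1"
          using assms(1) unfolding stochastic_pomdp_def by blast
        moreover have "\<forall>s'. T 1 undefined undefined s' = 0" using lr \<open>1 \<in> {1..H}\<close> \<open>d = 0\<close> by simp
        ultimately show False by simp
      qed
      have hs: "(histories h :: (('O \<times> 'A) list) set) = {[]}" using True unfolding histories_def by auto
      let ?V = "(\<lambda>j. (\<lambda>i. if i \<in> (tests_at H h :: ('O list \<times> 'A list) set) then test_prob mu T Om j i else 0)) ` histories h"
      have "V.dim ?V \<le> card ?V"
        by (rule V.dim_le_card) (auto simp: hs V.span_superset)
      also have "card ?V \<le> 1" unfolding hs by simp
      finally show ?thesis unfolding D_rank_def mat_rank_def using \<open>d \<noteq> 0\<close> by simp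
    qed
  next
    case False
    then have h1: "h \<in> {1..H}" using hH by simp
    let ?R = "tests_at H h :: ('O list \<times> 'A list) set"
    define g where "g i = (\<lambda>t. if t \<in> ?R then (\<Sum>s'\<in>UNIV. psi h s' i *
        fut T Om (Suc h) s' (fst t) (snd t)) else 0)" for i
    let ?V = "(\<lambda>j. (\<lambda>i. if i \<in> ?R then test_prob mu T Om j i else 0)) ` histories h"
    have "?V \<subseteq> V.span (g ` {..<d})"
    proof
      fix v assume "v \<in> ?V"
      then obtain tau where tau: "length tau = h" and v: "v = (\<lambda>i. if i \<in> ?R then test_prob mu T Om tau i else 0)"
        unfolding histories_def by auto
      obtain coef where "v = (\<Sum>i<d. (\<lambda>x. coef i * g i x))"
        using col_eq[where T=T and h=h and d=d and psi="psi h" and phi="phi h" and tau=tau and R="?R" and mu=mu and Om=Om] lr h1 tau False unfolding v g_def by auto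
      also have "\<dots> \<in> V.span (g ` {..<d})"
        by (intro V.span_sum V.span_scale V.span_base) auto
      finally show "v \<in> V.span (g ` {..<d})" .
    qed
    then have "V.dim ?V \<le> card (g ` {..<d})" by (rule V.dim_le_card) auto
    also have "\<dots> \<le> d" using card_image_le[of "{..<d}" g] by simp
    finally show ?thesis unfolding D_rank_def mat_rank_def .
  qed
  moreover have "d_PSR H mu T Om \<le> d"
    unfolding d_PSR_def using A by (subst Max_le_iff) auto
  ultimately show ?thesis by blast
qed

end
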